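(* Let $A$ be a commutative algebra over a field $K$ with multiplication $\star$ satisfying the Tortken identity $(a\star b)\star(c\star d)-(a\star d)\star(c\star b)=(a,b,c)\star d-(a,d,c)\star b$. Then for all $a,b,c,x,y\in A$: (i) $(a,y,b)\star(x\star c)+(b,y,c)\star(x\star a)+(c,y,a)\star(x\star b)-(a\star y)\star(b,x,c)-(b\star y)\star(c,x,a)-(c\star y)\star(a,x,b)=0$; (ii) if $\operatorname{char}K\neq3$: $((x\star a)\star(y\star b)-(x\star b)\star(y\star a))\star c+((x\star b)\star(y\star c)-(x\star c)\star(y\star b))\star a+((x\star c)\star(y\star a)-(x\star a)\star(y\star c))\star b=0$; (iii) $(x,y\star a,b)\star c+(x,y\star b,c)\star a+(x,y\star c,a)\star b-(x,y\star b,a)\star c-(x,y\star c,b)\star a-(x,y\star a,c)\star b=0$; (iv) $(((x\star a)\star b)\star c)\star y+(((x\star b)\star c)\star a)\star y+(((x\star c)\star a)\star b)\star y-(((x\star b)\star a)\star c)\star y-(((x\star c)\star b)\star a)\star y-(((x\star a)\star c)\star b)\star y=0$.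
   Context: The associator is $(a,b,c)=a\star(b\star c)-(a\star b)\star c$. *)

theory Defs
  imports Main "HOL.Vector_Spaces"
begin

definition comm_algebra ::
  "('k::field \<Rightarrow> 'a::ab_group_add \<Rightarrow> 'a) \<Rightarrow> ('a \<Rightarrow> 'a \<Rightarrow> 'a) \<Rightarrow> bool" where
  "comm_algebra scale mult \<longleftrightarrow>
     vector_space scale \<and>
     (\<forall>a b c. mult (a + b) c = mult a c + mult b c) \<and>
     (\<forall>a b c. mult a (b + c) = mult a b + mult a c) \<and>
     (\<forall>r a b. mult (scale r a) b = scale r (mult a b)) \<and>
     (\<forall>r a b. mult a (scale r b) = scale r (mult a b)) \<and>
     (\<forall>a b. mult a b = mult b a)"

definition assoc :: "('a::ab_group_add \<Rightarrow> 'a \<Rightarrow> 'a) \<Rightarrow> 'a \<Rightarrow> 'a \<Rightarrow> 'a \<Rightarrow> 'a" where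
  "assoc mult a b c = mult a (mult b c) - mult (mult a b) c"

definition tortken :: "('a::ab_group_add \<Rightarrow> 'a \<Rightarrow> 'a) \<Rightarrow> bool" where
  "tortken mult \<longleftrightarrow> (\<forall>a b c d.
     mult (mult a b) (mult c d) - mult (mult a d) (mult c b)
       = mult (assoc mult a b c) d - mult (assoc mult a d c) b)"

end

theory Submission
  imports Defs
begin

lemma part_i:
  fixes mult :: "'a::ab_group_add \<Rightarrow> 'a \<Rightarrow> 'a" (infixl "\<star>" 70)
  assumes ld: "\<And>a b c. (a + b) \<star> c = a \<star> c + b \<star> c"
    and rd: "\<And>a b c. a \<star> (b + c) = a \<star> b + a \<star> c"
    and comm: "\<And>a b. a \<star> b = b \<star> a"
    and T: "\<And>a b c d. (a \<star> b) \<star> (c \<star> d) - (a \<star> d) \<star> (c \<star> b) = assoc mult a b c \<star> d - assoc mult a d c \<star> b"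
  shows "assoc mult a y b \<star> (x \<star> c) + assoc mult b y c \<star> (x \<star> a) + assoc mult c y a \<star> (x \<star> b) - (a \<star> y) \<star> assoc mult b x c - (b \<star> y) \<star> assoc mult c x a - (c \<star> y) \<star> assoc mult a x b = 0"
proof -
  have dl: "\<And>a b c. (a - b) \<star> c = a \<star> c - b \<star> c" using ld by (metis add_diff_cancel eq_diff_eq)
  have dr: "\<And>a b c. c \<star> (a - b) = c \<star> a - c \<star> b" using dl comm by metis
  note h = T[of a x b "(c \<star> y)"]
    arg_cong[where f="\<lambda>t. t \<star> x", OF T[of c a b y]]
    arg_cong[where f="\<lambda>t. t \<star> x", OF T[of a y c b]]
    arg_cong[where f="\<lambda>t. t \<star> x", OF T[of a c b y]]
    T[of c x b "(a \<star> y)"]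
    T[of a "(b \<star> y)" c x]
  have "assoc mult a y b \<star> (x \<star> c) + assoc mult b y c \<star> (x \<star> a) + assoc mult c y a \<star> (x \<star> b) - (a \<star> y) \<star> assoc mult b x c - (b \<star> y) \<star> assoc mult c x a - (c \<star> y) \<star> assoc mult a x b = (((a \<star> x) \<star> (b \<star> (c \<star> y)) - (a \<star> (c \<star> y)) \<star> (b \<star> x)) + (((c \<star> a) \<star> (b \<star> y) - (c \<star> y) \<star> (b \<star> a)) \<star> x) - (((a \<star> y) \<star> (c \<star> b) - (a \<star> b) \<star> (c \<star> y)) \<star> x) - (((a \<star> c) \<star> (b \<star> y) - (a \<star> y) \<star> (b \<star> c)) \<star> x) - ((c \<star> x) \<star> (b \<star> (a \<star> y)) - (c \<star> (a \<star> y)) \<star> (b \<star> x)) + ((a \<star> (b \<star> y)) \<star> (c \<star> x) - (a \<star> x) \<star> (c \<star> (b \<star> y)))) - ((assoc mult a x b \<star> (c \<star> y) - assoc mult a (c \<star> y) b \<star> x) + ((assoc mult c a b \<star> y - assoc mult c y b \<star> a) \<star> x) - ((assoc mult a y c \<star> b - assoc mult a b c \<star> y) \<star> x) - ((assoc mult a c b \<star> y - assoc mult a y b \<star> c) \<star> x) - (assoc mult c x b \<star> (a \<star> y) - assoc mult c (a \<star> y) b \<star> x) + (assoc mult a (b \<star> y) c \<star> x - assoc mult a x c \<star> (b \<star> y)))"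
    by (simp add: assoc_def ld rd dl dr comm algebra_simps)
  also have "\<dots> = 0" by (simp only: h diff_self)
  finally show ?thesis .
qed

lemma part_ii:
  fixes mult :: "'a::ab_group_add \<Rightarrow> 'a \<Rightarrow> 'a" (infixl "\<star>" 70)
  assumes ld: "\<And>a b c. (a + b) \<star> c = a \<star> c + b \<star> c"
    and rd: "\<And>a b c. a \<star> (b + c) = a \<star> b + a \<star> c"
    and comm: "\<And>a b. a \<star> b = b \<star> a"
    and T: "\<And>a b c d. (a \<star> b) \<star> (c \<star> d) - (a \<star> d) \<star> (c \<star> b) = assoc mult a b c \<star> d - assoc mult a d c \<star> b"
  shows "(((x \<star> a) \<star> (y \<star> b) - (x \<star> b) \<star> (y \<star> a)) \<star> c + ((x \<star> b) \<star> (y \<star> c) - (x \<star> c) \<star> (y \<star> b)) \<star> a + ((x \<star> c) \<star> (y \<star> a) - (x \<star> a) \<star> (y \<star> c)) \<star> b) + (((x \<star> a) \<star> (y \<star> b) - (x \<star> b) \<star> (y \<star> a)) \<star> c + ((x \<star> b) \<star> (y \<star> c) - (x \<star> c) \<star> (y \<star> b)) \<star> a + ((x \<star> c) \<star> (y \<star> a) - (x \<star> a) \<star> (y \<star> c)) \<star> b) + (((x \<star> a) \<star> (y \<star> b) - (x \<star> b) \<star> (y \<star> a)) \<star> c + ((x \<star> b) \<star> (y \<star> c) - (x \<star> c) \<star> (y \<star> b)) \<star> a + ((x \<star> c) \<star> (y \<star> a) - (x \<star> a) \<star> (y \<star> c)) \<star> b) = 0"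
proof -
  have dl: "\<And>a b c. (a - b) \<star> c = a \<star> c - b \<star> c" using ld by (metis add_diff_cancel eq_diff_eq)
  have dr: "\<And>a b c. c \<star> (a - b) = c \<star> a - c \<star> b" using dl comm by metis
  note h = arg_cong[where f="\<lambda>t. t \<star> c", OF T[of y a x b]]
    arg_cong[where f="\<lambda>t. t \<star> a", OF T[of c y b x]]
    arg_cong[where f="\<lambda>t. t \<star> b", OF T[of y c a x]]
    T[of b c "(a \<star> y)" x]
    T[of b "(a \<star> y)" c x]
    T[of c y "(a \<star> x)" b]
    T[of b y c "(a \<star> x)"]
    T[of x c a "(b \<star> y)"]
    T[of y "(a \<star> c)" x b]
    arg_cong[where f="\<lambda>t. t \<star> b", OF T[of x c a y]]
    T[of "(b \<star> y)" c x a]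
    T[of "(a \<star> x)" y b c]
    T[of "(b \<star> x)" a y c]
    T[of "(a \<star> y)" b c x]
    T[of x b "(c \<star> y)" a]
    T[of y "(b \<star> x)" a c]
    T[of y b "(c \<star> x)" a]
  have "(((x \<star> a) \<star> (y \<star> b) - (x \<star> b) \<star> (y \<star> a)) \<star> c + ((x \<star> b) \<star> (y \<star> c) - (x \<star> c) \<star> (y \<star> b)) \<star> a + ((x \<star> c) \<star> (y \<star> a) - (x \<star> a) \<star> (y \<star> c)) \<star> b) + (((x \<star> a) \<star> (y \<star> b) - (x \<star> b) \<star> (y \<star> a)) \<star> c + ((x \<star> b) \<star> (y \<star> c) - (x \<star> c) \<star> (y \<star> b)) \<star> a + ((x \<star> c) \<star> (y \<star> a) - (x \<star> a) \<star> (y \<star> c)) \<star> b) + (((x \<star> a) \<star> (y \<star> b) - (x \<star> b) \<star> (y \<star> a)) \<star> c + ((x \<star> b) \<star> (y \<star> c) - (x \<star> c) \<star> (y \<star> b)) \<star> a + ((x \<star> c) \<star> (y \<star> a) - (x \<star> a) \<star> (y \<star> c)) \<star> b) = (- (((y \<star> a) \<star> (x \<star> b) - (y \<star> b) \<star> (x \<star> a)) \<star> c) + (((c \<star> y) \<star> (b \<star> x) - (c \<star> x) \<star> (b \<star> y)) \<star> a) - (((y \<star> c) \<star> (a \<star> x) - (y \<star> x) \<star> (a \<star> c)) \<star> b) + ((b \<star> c) \<star> ((a \<star> y) \<star> x) - (b \<star> x) \<star> ((a \<star> y) \<star> c)) - ((b \<star> (a \<star> y)) \<star> (c \<star> x)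 - (b \<star> x) \<star> (c \<star> (a \<star> y))) - ((c \<star> y) \<star> ((a \<star> x) \<star> b) - (c \<star> b) \<star> ((a \<star> x) \<star> y)) - ((b \<star> y) \<star> (c \<star> (a \<star> x)) - (b \<star> (a \<star> x)) \<star> (c \<star> y)) + ((x \<star> c) \<star> (a \<star> (b \<star> y)) - (x \<star> (b \<star> y)) \<star> (a \<star> c)) - ((y \<star> (a \<star> c)) \<star> (x \<star> b) - (y \<star> b) \<star> (x \<star> (a \<star> c))) + (((x \<star> c) \<star> (a \<star> y) - (x \<star> y) \<star> (a \<star> c)) \<star> b) + (((b \<star> y) \<star> c) \<star> (x \<star> a) - ((b \<star> y) \<star> a) \<star> (x \<star> c)) - (((a \<star> x) \<star> y) \<star> (b \<star> c) - ((a \<star> x) \<star> c) \<star> (b \<star> y)) + (((b \<star> x) \<star> a) \<star> (y \<star> c) - ((b \<star> x) \<star> c) \<star> (y \<star> a)) + (((a \<star> y) \<star> b) \<star> (c \<star> x) - ((a \<star> y) \<star> x) \<star> (c \<star> b)) + ((x \<star> b) \<star> ((c \<star> y) \<star> a) - (x \<star> a) \<star> ((c \<star> y) \<star> b)) + ((y \<star> (b \<star> x)) \<star> (a \<star> c) - (y \<star> c) \<star> (a \<star> (b \<star> x))) - ((y \<star> b) \<star> ((c \<star> x) \<star> a) - (y \<star> a) \<star> ((c \<star> x) \<star> b))) - (- ((assoc mult y a x \<star> b - assoc mult y b x \<star> a) \<star> c) + ((assoc mult c y b \<star> x - assoc mult c x b \<star> y) \<star> a) - ((assoc mult y c a \<star>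 x - assoc mult y x a \<star> c) \<star> b) + (assoc mult b c (a \<star> y) \<star> x - assoc mult b x (a \<star> y) \<star> c) - (assoc mult b (a \<star> y) c \<star> x - assoc mult b x c \<star> (a \<star> y)) - (assoc mult c y (a \<star> x) \<star> b - assoc mult c b (a \<star> x) \<star> y) - (assoc mult b y c \<star> (a \<star> x) - assoc mult b (a \<star> x) c \<star> y) + (assoc mult x c a \<star> (b \<star> y) - assoc mult x (b \<star> y) a \<star> c) - (assoc mult y (a \<star> c) x \<star> b - assoc mult y b x \<star> (a \<star> c)) + ((assoc mult x c a \<star> y - assoc mult x y a \<star> c) \<star> b) + (assoc mult (b \<star> y) c x \<star> a - assoc mult (b \<star> y) a x \<star> c) - (assoc mult (a \<star> x) y b \<star> c - assoc mult (a \<star> x) c b \<star> y) + (assoc mult (b \<star> x) a y \<star> c - assoc mult (b \<star> x) c y \<star> a) + (assoc mult (a \<star> y) b c \<star> x - assoc mult (a \<star> y) x c \<star> b) + (assoc mult x b (c \<star> y) \<star> a - assoc mult x a (c \<star> y) \<star> b) + (assoc mult y (b \<star> x) a \<star> c - assoc mult y c a \<star> (b \<star> x)) - (assoc mult y b (c \<star> x) \<star> a - assoc mult y a (c \<star> x) \<star> b))"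
    by (simp add: assoc_def ld rd dl dr comm algebra_simps)
  also have "\<dots> = 0" by (simp only: h diff_self)
  finally show ?thesis .
qed

lemma part_iii:
  fixes mult :: "'a::ab_group_add \<Rightarrow> 'a \<Rightarrow> 'a" (infixl "\<star>" 70)
  assumes ld: "\<And>a b c. (a + b) \<star> c = a \<star> c + b \<star> c"
    and rd: "\<And>a b c. a \<star> (b + c) = a \<star> b + a \<star> c"
    and comm: "\<And>a b. a \<star> b = b \<star> a"
    and T: "\<And>a b c d. (a \<star> b) \<star> (c \<star> d) - (a \<star> d) \<star> (c \<star> b) = assoc mult a b c \<star> d - assoc mult a d c \<star> b"
  shows "assoc mult x (y \<star> a) b \<star> c + assoc mult x (y \<star> b) c \<star> a + assoc mult x (y \<star> c) a \<star> b - assoc mult x (y \<star> b) a \<star> c - assoc mult x (y \<star> c) b \<star> a - assoc mult x (y \<star> a) c \<star> b = 0"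
proof -
  have dl: "\<And>a b c. (a - b) \<star> c = a \<star> c - b \<star> c" using ld by (metis add_diff_cancel eq_diff_eq)
  have dr: "\<And>a b c. c \<star> (a - b) = c \<star> a - c \<star> b" using dl comm by metis
  note h = arg_cong[where f="\<lambda>t. t \<star> c", OF T[of b x y a]]
    arg_cong[where f="\<lambda>t. t \<star> c", OF T[of y a x b]]
    arg_cong[where f="\<lambda>t. t \<star> a", OF T[of x c b y]]
    T[of a b c "(x \<star> y)"]
    arg_cong[where f="\<lambda>t. t \<star> a", OF T[of b y c x]]
    arg_cong[where f="\<lambda>t. t \<star> c", OF T[of a x y b]]
    T[of b c a "(x \<star> y)"]
    arg_cong[where f="\<lambda>t. t \<star> b", OF T[of y a c x]]
    arg_cong[where f="\<lambda>t. t \<star> b", OF T[of y c a x]]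
    arg_cong[where f="\<lambda>t. t \<star> b", OF T[of x a y c]]
    T[of c a b "(x \<star> y)"]
    arg_cong[where f="\<lambda>t. t \<star> a", OF T[of c y x b]]
  have "assoc mult x (y \<star> a) b \<star> c + assoc mult x (y \<star> b) c \<star> a + assoc mult x (y \<star> c) a \<star> b - assoc mult x (y \<star> b) a \<star> c - assoc mult x (y \<star> c) b \<star> a - assoc mult x (y \<star> a) c \<star> b = ((((b \<star> x) \<star> (y \<star> a) - (b \<star> a) \<star> (y \<star> x)) \<star> c) - (((y \<star> a) \<star> (x \<star> b) - (y \<star> b) \<star> (x \<star> a)) \<star> c) - (((x \<star> c) \<star> (b \<star> y) - (x \<star> y) \<star> (b \<star> c)) \<star> a) - ((a \<star> b) \<star> (c \<star> (x \<star> y)) - (a \<star> (x \<star> y)) \<star> (c \<star> b)) + (((b \<star> y) \<star> (c \<star> x) - (b \<star> x) \<star> (c \<star> y)) \<star> a) - (((a \<star> x) \<star> (y \<star> b) - (a \<star> b) \<star> (y \<star> x)) \<star> c) - ((b \<star> c) \<star> (a \<star> (x \<star> y)) - (b \<star> (x \<star> y)) \<star> (a \<star> c)) - (((y \<star> a) \<star> (c \<star> x) - (y \<star> x) \<star> (c \<star> a)) \<star> b) + (((y \<star> c) \<star> (a \<star> x) - (y \<star> x) \<star> (a \<star> c)) \<star> b) - (((x \<star> a) \<star> (y \<star> c) - (x \<star> c) \<star> (y \<star> a)) \<star> b) - ((c \<star> a) \<star> (b \<star> (x \<star> y)) - (c \<star> (x \<star> y)) \<star> (b \<star> a)) + (((c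 \<star> y) \<star> (x \<star> b) - (c \<star> b) \<star> (x \<star> y)) \<star> a)) - (((assoc mult b x y \<star> a - assoc mult b a y \<star> x) \<star> c) - ((assoc mult y a x \<star> b - assoc mult y b x \<star> a) \<star> c) - ((assoc mult x c b \<star> y - assoc mult x y b \<star> c) \<star> a) - (assoc mult a b c \<star> (x \<star> y) - assoc mult a (x \<star> y) c \<star> b) + ((assoc mult b y c \<star> x - assoc mult b x c \<star> y) \<star> a) - ((assoc mult a x y \<star> b - assoc mult a b y \<star> x) \<star> c) - (assoc mult b c a \<star> (x \<star> y) - assoc mult b (x \<star> y) a \<star> c) - ((assoc mult y a c \<star> x - assoc mult y x c \<star> a) \<star> b) + ((assoc mult y c a \<star> x - assoc mult y x a \<star> c) \<star> b) - ((assoc mult x a y \<star> c - assoc mult x c y \<star> a) \<star> b) - (assoc mult c a b \<star> (x \<star> y) - assoc mult c (x \<star> y) b \<star> a) + ((assoc mult c y x \<star> b - assoc mult c b x \<star> y) \<star> a))"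
    by (simp add: assoc_def ld rd dl dr comm algebra_simps)
  also have "\<dots> = 0" by (simp only: h diff_self)
  finally show ?thesis .
qed

lemma part_iv:
  fixes mult :: "'a::ab_group_add \<Rightarrow> 'a \<Rightarrow> 'a" (infixl "\<star>" 70)
  assumes ld: "\<And>a b c. (a + b) \<star> c = a \<star> c + b \<star> c"
    and rd: "\<And>a b c. a \<star> (b + c) = a \<star> b + a \<star> c"
    and comm: "\<And>a b. a \<star> b = b \<star> a"
    and T: "\<And>a b c d. (a \<star> b) \<star> (c \<star> d) - (a \<star> d) \<star> (c \<star> b) = assoc mult a b c \<star> d - assoc mult a d c \<star> b"
  shows "(((x \<star> a) \<star> b) \<star> c) \<star> y + (((x \<star> b) \<star> c) \<star> a) \<star> y + (((x \<star> c) \<star> a) \<star> b) \<star> y - (((x \<star> b) \<star> a) \<star> c) \<star> y - (((x \<star> c) \<star> b) \<star> a) \<star> y - (((x \<star> a) \<star> c) \<star> b) \<star> y = 0"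
proof -
  have dl: "\<And>a b c. (a - b) \<star> c = a \<star> c - b \<star> c" using ld by (metis add_diff_cancel eq_diff_eq)
  have dr: "\<And>a b c. c \<star> (a - b) = c \<star> a - c \<star> b" using dl comm by metis
  note h = arg_cong[where f="\<lambda>t. t \<star> y", OF T[of c b a x]]
    arg_cong[where f="\<lambda>t. t \<star> y", OF T[of b c a x]]
    arg_cong[where f="\<lambda>t. t \<star> y", OF T[of c x b a]]
  have "(((x \<star> a) \<star> b) \<star> c) \<star> y + (((x \<star> b) \<star> c) \<star> a) \<star> y + (((x \<star> c) \<star> a) \<star> b) \<star> y - (((x \<star> b) \<star> a) \<star> c) \<star> y - (((x \<star> c) \<star> b) \<star> a) \<star> y - (((x \<star> a) \<star> c) \<star> b) \<star> y = (- (((c \<star> b) \<star> (a \<star> x) - (c \<star> x) \<star> (a \<star> b)) \<star> y) + (((b \<star> c) \<star> (a \<star> x) - (b \<star> x) \<star> (a \<star> c)) \<star> y) - (((c \<star> x) \<star> (b \<star> a) - (c \<star> a) \<star> (b \<star> x)) \<star> y)) - (- ((assoc mult c b a \<star> x - assoc mult c x a \<star> b) \<star> y) + ((assoc mult b c a \<star> x - assoc mult b x a \<star> c) \<star> y) - ((assoc mult c x b \<star> a - assoc mult c a b \<star> x) \<star> y))"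
    by (simp add: assoc_def ld rd dl dr comm algebra_simps)
  also have "\<dots> = 0" by (simp only: h diff_self)
  finally show ?thesis .
qed

theorem mainTheorem19:
  fixes scale :: "'k::field \<Rightarrow> 'a::ab_group_add \<Rightarrow> 'a"
    and mult :: "'a \<Rightarrow> 'a \<Rightarrow> 'a" (infixl "\<star>" 70)
  assumes alg: "comm_algebra scale mult"
    and tk: "tortken mult"
  shows
   "(\<forall>a b c x y.
      assoc (\<star>) a y b \<star> (x \<star> c) + assoc (\<star>) b y c \<star> (x \<star> a) + assoc (\<star>) c y a \<star> (x \<star> b)
      - (a \<star> y) \<star> assoc (\<star>) b x c - (b \<star> y) \<star> assoc (\<star>) c x a - (c \<star> y) \<star> assoc (\<star>) a x b = 0)
   \<and>
   ((3::'k) \<noteq> 0 \<longrightarrow> (\<forall>a b c x y.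
      ((x \<star> a) \<star> (y \<star> b) - (x \<star> b) \<star> (y \<star> a)) \<star> c
      + ((x \<star> b) \<star> (y \<star> c) - (x \<star> c) \<star> (y \<star> b)) \<star> a
      + ((x \<star> c) \<star> (y \<star> a) - (x \<star> a) \<star> (y \<star> c)) \<star> b = 0))
   \<and>
   (\<forall>a b c x y.
      assoc (\<star>) x (y \<star> a) b \<star> c + assoc (\<star>) x (y \<star> b) c \<star> a + assoc (\<star>) x (y \<star> c) a \<star> b
      - assoc (\<star>) x (y \<star> b) a \<star> c - assoc (\<star>) x (y \<star> c) b \<star> a - assoc (\<star>) x (y \<star> a) c \<star> b = 0)
   \<and>
   (\<forall>a b c x y.
      (((x \<star> a) \<star> b) \<star> c) \<star> y + (((x \<star> b) \<star> c) \<star> a) \<star> y + (((x \<star> c) \<star> a) \<star> b) \<star> y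
      - (((x \<star> b) \<star> a) \<star> c) \<star> y - (((x \<star> c) \<star> b) \<star> a) \<star> y - (((x \<star> a) \<star> c) \<star> b) \<star> y = 0)"
proof -
  have ld: "\<And>a b c. (a + b) \<star> c = a \<star> c + b \<star> c"
    and rd: "\<And>a b c. a \<star> (b + c) = a \<star> b + a \<star> c"
    and comm: "\<And>a b. a \<star> b = b \<star> a"
    and vs: "vector_space scale"
    using alg unfolding comm_algebra_def by auto
  have T: "\<And>a b c d. (a \<star> b) \<star> (c \<star> d) - (a \<star> d) \<star> (c \<star> b) = assoc mult a b c \<star> d - assoc mult a d c \<star> b"
    using tk unfolding tortken_def by blast
  have three: "g = 0" if "g + g + g = 0" "(3::'k) \<noteq> 0" for g :: 'a
  proof -
    have d: "\<And>p q z. scale (p+q) z = scale p z + scale q z" and o: "\<And>z. scale 1 z = z"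
      using vector_space.vector_space_assms[OF vs] by auto
    have "scale 3 g = scale (1+1+1) g" by simp
    also have "\<dots> = g + g + g" by (simp only: d o)
    finally have "scale 3 g = g + g + g" .
    then have "scale 3 g = 0" using that by simp
    then show ?thesis using that vector_space.scale_eq_0_iff[OF vs] by blast
  qed
  show ?thesis
    using part_i[of mult, OF ld rd comm T] part_iii[of mult, OF ld rd comm T]
      part_iv[of mult, OF ld rd comm T] three[OF part_ii[of mult, OF ld rd comm T]]
    by blast
qed

end
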